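(* Let $n\ge 2$ be an integer and $g=3n+2$, and let $G=\{\ell_1<\dots<\ell_g\}$ be a pure $(2n+1)$-sparse gapset of genus $g$. Then there is a unique $\alpha\in[1,g-1]$ such that $\ell_{\alpha+1}-\ell_\alpha=2n+1$.
   Context: A gapset is a finite set $G\subset\mathbb{N}=\{1,2,\dots\}$ such that whenever $z\in G$ and $z=x+y$ with $x,y\in\mathbb{N}$, then $x\in G$ or $y\in G$; its genus is $g=\#G$. $G$ is pure $\kappa$-sparse if $\ell_{i+1}-\ell_i\le\kappa$ for all $i$ with equality for some $i$. *)

theory Defs
  imports Main
begin

definition gapset :: "nat set \<Rightarrow> bool" where
  "gapset G \<longleftrightarrow> finite G \<and> 0 \<notin> G \<and>
     (\<forall>z\<in>G. \<forall>x y. x \<ge> 1 \<and> y \<ge> 1 \<and> z = x + y \<longrightarrow> x \<in> G \<or> y \<in> G)"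

definition genus :: "nat set \<Rightarrow> nat" where
  "genus G = card G"

(* ell G i = i-th smallest element of G, 1-indexed: ell G 1 < ell G 2 < ... < ell G (card G) *)
definition ell :: "nat set \<Rightarrow> nat \<Rightarrow> nat" where
  "ell G i = sorted_list_of_set G ! (i - 1)"

definition pure_sparse :: "nat \<Rightarrow> nat set \<Rightarrow> bool" where
  "pure_sparse \<kappa> G \<longleftrightarrow>
     (\<forall>i. 1 \<le> i \<and> i < card G \<longrightarrow> ell G (i+1) - ell G i \<le> \<kappa>) \<and>
     (\<exists>i. 1 \<le> i \<and> i < card G \<and> ell G (i+1) - ell G i = \<kappa>)"

end

theory Submission
  imports Defs
begin

lemma ell_less:
  assumes "finite G" "1 \<le> i" "i < j" "j \<le> card G"
  shows "ell G i < ell G j"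
proof -
  have "sorted_wrt (<) (sorted_list_of_set G)" by simp
  moreover have "j - 1 < length (sorted_list_of_set G)" using assms by simp
  ultimately show ?thesis unfolding ell_def
    using assms by (metis diff_less_mono less_le_trans sorted_wrt_nth_less)
qed

lemma ell_between:
  assumes "finite G" "1 \<le> i" "i < card G" "ell G i < x" "x < ell G (i+1)"
  shows "x \<notin> G"
proof
  assume "x \<in> G"
  then have "x \<in> set (sorted_list_of_set G)" using assms by simp
  then obtain j where j: "j < card G" "sorted_list_of_set G ! j = x"
    by (metis in_set_conv_nth length_sorted_list_of_set)
  have x: "x = ell G (j+1)" using j by (simp add: ell_def)
  show False
  proof (cases "j + 1 \<le> i")
    case True
    then have "ell G (j+1) \<le> ell G i"
      using ell_less[OF assms(1), of "j+1" i] assms by (cases "j+1 = i") auto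
    then show False using x assms by simp
  next
    case False
    then have "i + 1 \<le> j + 1" by simp
    then have "ell G (i+1) \<le> ell G (j+1)"
      using ell_less[OF assms(1), of "i+1" "j+1"] j by (cases "i+1 = j+1") auto
    then show False using x assms by simp
  qed
qed

lemma gap_rule:
  assumes "gapset G" "z \<in> G" "1 \<le> s" "s < z" "s \<notin> G"
  shows "z - s \<in> G"
proof -
  have "z = s + (z - s)" using assms by simp
  moreover have "z - s \<ge> 1" using assms by simp
  ultimately show ?thesis using assms unfolding gapset_def by blast
qed

theorem mainTheorem19:
  fixes n g :: nat and G :: "nat set"
  assumes "n \<ge> 2" and "g = 3*n + 2"
    and "gapset G" and "genus G = g" and "pure_sparse (2*n+1) G"
  shows "\<exists>!\<alpha>. 1 \<le> \<alpha> \<and> \<alpha> \<le> g - 1 \<and> ell G (\<alpha>+1) - ell G \<alpha> = 2*n+1"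
proof -
  have fin: "finite G" using assms(3) by (simp add: gapset_def)
  have cG: "card G = g" using assms(4) by (simp add: genus_def)
  obtain i where i: "1 \<le> i" "i < card G" "ell G (i+1) - ell G i = 2*n+1"
    using assms(5) unfolding pure_sparse_def by blast
  have key: False if A: "1 \<le> \<alpha>" "\<alpha> < \<beta>" "\<beta> + 1 \<le> g"
      "ell G (\<alpha>+1) - ell G \<alpha> = 2*n+1" "ell G (\<beta>+1) - ell G \<beta> = 2*n+1" for \<alpha> \<beta>
  proof -
    define a where "a = ell G \<alpha>"
    define b where "b = ell G \<beta>"
    define z where "z = ell G (\<beta>+1)"
    have ab1: "a < ell G (\<alpha>+1)" unfolding a_def using ell_less[OF fin, of \<alpha> "\<alpha>+1"] A cG by simp
    have a1: "ell G (\<alpha>+1) = a + 2*n+1" using A(4) ab1 unfolding a_def by simp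
    have bz: "b < z" unfolding b_def z_def using ell_less[OF fin, of \<beta> "\<beta>+1"] A cG by simp
    have z: "z = b + 2*n+1" using A(5) bz unfolding b_def z_def by simp
    have "ell G (\<alpha>+1) \<le> b" unfolding b_def
      using ell_less[OF fin, of "\<alpha>+1" \<beta>] A cG by (cases "\<alpha>+1 = \<beta>") auto
    then have ba: "a + 2*n+1 \<le> b" using a1 by simp
    have zG: "z \<in> G" unfolding z_def ell_def using A cG fin
      by (metis add_diff_cancel_right' length_sorted_list_of_set less_le_trans nth_mem set_sorted_list_of_set less_add_one le_less_trans)
    have S1: "{1..2*n} \<subseteq> G"
    proof
      fix k assume k: "k \<in> {1..2*n}"
      have nG: "z - k \<notin> G"
        apply (rule ell_between[OF fin, of \<beta>]) using A cG k z unfolding b_def[symmetric] z_def[symmetric] by auto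
      have "z - (z - k) \<in> G" apply (rule gap_rule[OF assms(3) zG]) using k z nG by auto
      then show "k \<in> G" using k z by simp
    qed
    define d where "d = b - a"
    have S2: "{d+1..d+2*n} \<subseteq> G"
    proof
      fix k assume k: "k \<in> {d+1..d+2*n}"
      have nG: "z - k \<notin> G"
        apply (rule ell_between[OF fin, of \<alpha>]) using A cG k z ba a1 unfolding a_def[symmetric] d_def by auto
      have "z - (z - k) \<in> G" apply (rule gap_rule[OF assms(3) zG]) using k z nG ba d_def by auto
      moreover have "z - (z - k) = k" using k z ba d_def by auto
      ultimately show "k \<in> G" by simp
    qed
    have disj: "{1..2*n} \<inter> {d+1..d+2*n} = {}" using ba d_def by auto
    have c1: "card ({1..2*n} \<union> {d+1..d+2*n}) = 4*n"
      using card_Un_disjoint[of "{1..2*n}" "{d+1..d+2*n}"] disj by simp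
    have zn: "z \<notin> {1..2*n} \<union> {d+1..d+2*n}" using z ba d_def by auto
    have sub: "insert z ({1..2*n} \<union> {d+1..d+2*n}) \<subseteq> G" using S1 S2 zG by auto
    have "card (insert z ({1..2*n} \<union> {d+1..d+2*n})) = 4*n+1" using c1 zn by simp
    with card_mono[OF fin sub] cG assms(1,2) show False by simp
  qed
  show ?thesis
  proof (rule ex1I[of _ i])
    show "1 \<le> i \<and> i \<le> g - 1 \<and> ell G (i+1) - ell G i = 2*n+1" using i cG by simp
  next
    fix j assume j: "1 \<le> j \<and> j \<le> g - 1 \<and> ell G (j+1) - ell G j = 2*n+1"
    show "j = i"
    proof (rule ccontr)
      assume "j \<noteq> i"
      then consider "j < i" | "i < j" by linarith
      then show False
      proof cases
        case 1 then show False using key[of j i] i j cG by simp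
      next
        case 2 then show False using key[of i j] i j cG assms(2) by simp
      qed
    qed
  qed
qed

end
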